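(* Suppose the rewards are $R_{\mathcal{T}}(s)=\langle f(\mathcal{T}),W_Rs\rangle$ for a function $f:\mathcal{C}^n\to\mathbb{R}^d$ which, for each $i\in\{1,\dots,n\}$, is $L_i$-Lipschitz in the capability $\mathcal{T}_i$ of agent $i$ (other capabilities fixed) with respect to $|\cdot|_\infty$ on both domain and codomain, while the transition dynamics do not depend on the capabilities. Let $s_{max}=\max_{s\in S}\|W_Rs\|_1$. Then for any two team compositions $\mathcal{T}^x,\mathcal{T}^y\in\mathcal{C}^n$, $$|V^*_{\mathcal{T}^x}-V^*_{\mathcal{T}^y}|\le\frac{s_{max}\sum_{i=1}^nL_i|\mathcal{T}^x_i-\mathcal{T}^y_i|_\infty}{\gamma(1-\gamma)}.$$
   Context: Setting. $S\subset[0,1]^k$ is a finite set of states (each state identified with its feature vector), $U$ is a finite individual action set, there are $n$ agents with joint action set $U^n$, $\rho$ is an initial state distribution on $S$ and $\gamma\in(0,1)$ is the discount factor. Capability vectors lie in $\mathcal{C}\subseteq\Delta_{d-1}$, the probability simplex in $\mathbb{R}^d$; a team composition is $\mathcal{T}=(\mathcal{T}_1,\dots,\mathcal{T}_n)\in\mathcal{C}^n$. $W_R\in\mathbb{R}^{d\times k}$ is a fixed matrix and $P(s'|s,\mathbf{u})$ is a fixed transition kernel common to all team compositions. Team composition $\mathcal{T}$ defines the MMDP with reward $R_{\mathcal{T}}$ and transitions $P$; $V^*_{\mathcal{T}}(s)$ is its optimal expected discounted return from $s$ and $V^*_{\mathcal{T}}=\mathbb{E}_{s_0\sim\rho}V^*_{\mathcal{T}}(s_0)$.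 $|\cdot|_\infty$, $\|\cdot\|_1$ are the sup and $\ell_1$ norms. *)

theory Defs
  imports "HOL-Analysis.Analysis"
begin

text \<open>States are feature vectors in real^'k, agents are indexed by the finite type 'n,
  individual actions by the finite type 'u (so U = UNIV), joint actions are 'n \<Rightarrow> 'u.\<close>

definition prob_simplex :: "(real^'d) set" where
  "prob_simplex = {c. (\<forall>i. 0 \<le> c $ i) \<and> (\<Sum>i\<in>UNIV. c $ i) = 1}"

definition l1norm :: "real^'d \<Rightarrow> real" where
  "l1norm x = (\<Sum>i\<in>UNIV. \<bar>x $ i\<bar>)"

text \<open>Expected discounted return over the first N steps of a (deterministic, history-dependent)
  policy pi, started from history h; reward R is collected at every visited state.\<close>
fun ret_h :: "('s \<Rightarrow> real) \<Rightarrow> ('s \<Rightarrow> 'a \<Rightarrow> 's \<Rightarrow> real) \<Rightarrow> 's set \<Rightarrow> real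
      \<Rightarrow> ('s list \<Rightarrow> 'a) \<Rightarrow> nat \<Rightarrow> 's list \<Rightarrow> real" where
  "ret_h R P S \<gamma> pol 0 h = 0"
| "ret_h R P S \<gamma> pol (Suc N) h =
     R (last h) + \<gamma> * (\<Sum>s'\<in>S. P (last h) (pol h) s' * ret_h R P S \<gamma> pol N (h @ [s']))"

definition policy_value :: "('s \<Rightarrow> real) \<Rightarrow> ('s \<Rightarrow> 'a \<Rightarrow> 's \<Rightarrow> real) \<Rightarrow> 's set \<Rightarrow> real
      \<Rightarrow> ('s list \<Rightarrow> 'a) \<Rightarrow> 's \<Rightarrow> real" where
  "policy_value R P S \<gamma> pol s = lim (\<lambda>N. ret_h R P S \<gamma> pol N [s])"

definition opt_value_state :: "('s \<Rightarrow> real) \<Rightarrow> ('s \<Rightarrow> 'a \<Rightarrow> 's \<Rightarrow> real) \<Rightarrow> 's set \<Rightarrow> real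
      \<Rightarrow> 's \<Rightarrow> real" where
  "opt_value_state R P S \<gamma> s = (SUP pol. policy_value R P S \<gamma> pol s)"

definition opt_value :: "('s \<Rightarrow> real) \<Rightarrow> ('s \<Rightarrow> 'a \<Rightarrow> 's \<Rightarrow> real) \<Rightarrow> 's set \<Rightarrow> real
      \<Rightarrow> ('s \<Rightarrow> real) \<Rightarrow> real" where
  "opt_value R P S \<gamma> \<rho> = (\<Sum>s\<in>S. \<rho> s * opt_value_state R P S \<gamma> s)"

definition team_reward :: "(('n \<Rightarrow> real^'d) \<Rightarrow> real^'d) \<Rightarrow> real^'k^'d \<Rightarrow> ('n \<Rightarrow> real^'d)
      \<Rightarrow> real^'k \<Rightarrow> real" where
  "team_reward f W T s = f T \<bullet> (W *v s)"

end

theory Submission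
  imports Defs
begin

lemma abs_mult_le:
  fixes a x c :: real
  assumes "0 \<le> a" "\<bar>x\<bar> \<le> c"
  shows "\<bar>a * x\<bar> \<le> a * c"
  using assms by (simp add: abs_mult mult_left_mono)

lemma conv_geom:
  fixes a :: "nat \<Rightarrow> real"
  assumes "\<And>n. \<bar>a (Suc n) - a n\<bar> \<le> M * g ^ n" and "0 \<le> g" "g < 1"
  shows "convergent a"
proof -
  have "summable (\<lambda>n. M * g ^ n)" using assms by (simp add: summable_geometric)
  hence "summable (\<lambda>n. a (Suc n) - a n)"
    by (rule summable_comparison_test[rotated]) (use assms(1) in auto)
  then obtain s where "(\<lambda>n. a (Suc n) - a n) sums s" by blast
  hence "(\<lambda>N. \<Sum>n<N. a (Suc n) - a n) \<longlonglongrightarrow> s" by (simp add: sums_def)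
  hence "(\<lambda>N. a N - a 0) \<longlonglongrightarrow> s" by (simp add: sum_lessThan_telescope)
  hence "(\<lambda>N. (a N - a 0) + a 0) \<longlonglongrightarrow> s + a 0" by (intro tendsto_add) auto
  thus ?thesis by (auto simp: convergent_def)
qed

lemma ret_cauchy:
  assumes fin: "finite S"
    and Pn: "\<forall>s\<in>S. \<forall>u. \<forall>s'\<in>S. 0 \<le> P s u s'"
    and P1: "\<forall>s\<in>S. \<forall>u. (\<Sum>s'\<in>S. P s u s') = 1"
    and g: "0 \<le> \<gamma>"
    and RM: "\<forall>s\<in>S. \<bar>R s\<bar> \<le> M"
    and h: "last h \<in> S"
  shows "\<bar>ret_h R P S \<gamma> pol (Suc N) h - ret_h R P S \<gamma> pol N h\<bar> \<le> M * \<gamma> ^ N"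
  using h
proof (induction N arbitrary: h)
  case 0
  then show ?case using RM by simp
next
  case (Suc N)
  let ?l = "last h" and ?u = "pol h"
  have eq: "ret_h R P S \<gamma> pol (Suc (Suc N)) h - ret_h R P S \<gamma> pol (Suc N) h
     = \<gamma> * (\<Sum>s'\<in>S. P ?l ?u s' * (ret_h R P S \<gamma> pol (Suc N) (h @ [s']) - ret_h R P S \<gamma> pol N (h @ [s'])))"
    by (simp only: ret_h.simps) (simp add: right_diff_distrib sum_subtractf)
  have "\<bar>\<Sum>s'\<in>S. P ?l ?u s' * (ret_h R P S \<gamma> pol (Suc N) (h @ [s']) - ret_h R P S \<gamma> pol N (h @ [s']))\<bar>
     \<le> (\<Sum>s'\<in>S. P ?l ?u s' * (M * \<gamma> ^ N))"
  proof (rule order_trans[OF sum_abs], rule sum_mono)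
    fix s' assume s': "s' \<in> S"
    have "0 \<le> P ?l ?u s'" using Pn Suc.prems s' by auto
    moreover have "\<bar>ret_h R P S \<gamma> pol (Suc N) (h @ [s']) - ret_h R P S \<gamma> pol N (h @ [s'])\<bar> \<le> M * \<gamma> ^ N"
      using Suc.IH[of "h @ [s']"] s' by simp
    ultimately show "\<bar>P ?l ?u s' * (ret_h R P S \<gamma> pol (Suc N) (h @ [s']) - ret_h R P S \<gamma> pol N (h @ [s']))\<bar>
       \<le> P ?l ?u s' * (M * \<gamma> ^ N)" by (simp add: abs_mult mult_left_mono)
  qed
  also have "\<dots> = M * \<gamma> ^ N" using P1 Suc.prems by (simp add: sum_distrib_right[symmetric])
  finally have B: "\<bar>\<Sum>s'\<in>S. P ?l ?u s' * (ret_h R P S \<gamma> pol (Suc N) (h @ [s']) - ret_h R P S \<gamma> pol N (h @ [s']))\<bar> \<le> M * \<gamma> ^ N" .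
  have "\<bar>\<gamma> * (\<Sum>s'\<in>S. P ?l ?u s' * (ret_h R P S \<gamma> pol (Suc N) (h @ [s']) - ret_h R P S \<gamma> pol N (h @ [s'])))\<bar> \<le> \<gamma> * (M * \<gamma> ^ N)"
    using B g by (intro abs_mult_le)
  thus ?case unfolding eq by (simp add: mult.left_commute del: ret_h.simps)
qed

lemma ret_diff:
  assumes fin: "finite S"
    and Pn: "\<forall>s\<in>S. \<forall>u. \<forall>s'\<in>S. 0 \<le> P s u s'"
    and P1: "\<forall>s\<in>S. \<forall>u. (\<Sum>s'\<in>S. P s u s') = 1"
    and g: "0 \<le> \<gamma>" "\<gamma> < 1"
    and RD: "\<forall>s\<in>S. \<bar>R1 s - R2 s\<bar> \<le> \<delta>"
    and h: "last h \<in> S"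
  shows "\<bar>ret_h R1 P S \<gamma> pol N h - ret_h R2 P S \<gamma> pol N h\<bar> \<le> \<delta> / (1 - \<gamma>)"
  using h
proof (induction N arbitrary: h)
  case 0
  have "0 \<le> \<delta>" using RD 0 by (meson abs_ge_zero order_trans)
  then show ?case using g by simp
next
  case (Suc N)
  let ?l = "last h" and ?u = "pol h"
  have eq: "ret_h R1 P S \<gamma> pol (Suc N) h - ret_h R2 P S \<gamma> pol (Suc N) h
     = (R1 ?l - R2 ?l) + \<gamma> * (\<Sum>s'\<in>S. P ?l ?u s' * (ret_h R1 P S \<gamma> pol N (h @ [s']) - ret_h R2 P S \<gamma> pol N (h @ [s'])))"
    by (simp only: ret_h.simps) (simp add: right_diff_distrib sum_subtractf)
  have "\<bar>\<Sum>s'\<in>S. P ?l ?u s' * (ret_h R1 P S \<gamma> pol N (h @ [s']) - ret_h R2 P S \<gamma> pol N (h @ [s']))\<bar>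
     \<le> (\<Sum>s'\<in>S. P ?l ?u s' * (\<delta> / (1 - \<gamma>)))"
  proof (rule order_trans[OF sum_abs], rule sum_mono)
    fix s' assume s': "s' \<in> S"
    have "0 \<le> P ?l ?u s'" using Pn Suc.prems s' by auto
    moreover have "\<bar>ret_h R1 P S \<gamma> pol N (h @ [s']) - ret_h R2 P S \<gamma> pol N (h @ [s'])\<bar> \<le> \<delta> / (1 - \<gamma>)"
      using Suc.IH[of "h @ [s']"] s' by simp
    ultimately show "\<bar>P ?l ?u s' * (ret_h R1 P S \<gamma> pol N (h @ [s']) - ret_h R2 P S \<gamma> pol N (h @ [s']))\<bar>
       \<le> P ?l ?u s' * (\<delta> / (1 - \<gamma>))" by (intro abs_mult_le)
  qed
  also have "\<dots> = \<delta> / (1 - \<gamma>)" by (simp only: sum_distrib_right[symmetric]) (use P1 Suc.prems in simp)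
  finally have B: "\<bar>\<Sum>s'\<in>S. P ?l ?u s' * (ret_h R1 P S \<gamma> pol N (h @ [s']) - ret_h R2 P S \<gamma> pol N (h @ [s']))\<bar> \<le> \<delta> / (1 - \<gamma>)" .
  have A: "\<bar>R1 ?l - R2 ?l\<bar> \<le> \<delta>" using RD Suc.prems by auto
  have "\<bar>ret_h R1 P S \<gamma> pol (Suc N) h - ret_h R2 P S \<gamma> pol (Suc N) h\<bar> \<le> \<delta> + \<gamma> * (\<delta> / (1 - \<gamma>))"
  proof -
    have C: "\<bar>\<gamma> * (\<Sum>s'\<in>S. P ?l ?u s' * (ret_h R1 P S \<gamma> pol N (h @ [s']) - ret_h R2 P S \<gamma> pol N (h @ [s'])))\<bar> \<le> \<gamma> * (\<delta> / (1 - \<gamma>))"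
      by (rule abs_mult_le[OF g(1) B])
    show ?thesis unfolding eq
      using A C abs_triangle_ineq[of "R1 ?l - R2 ?l" "\<gamma> * (\<Sum>s'\<in>S. P ?l ?u s' * (ret_h R1 P S \<gamma> pol N (h @ [s']) - ret_h R2 P S \<gamma> pol N (h @ [s'])))"]
      by linarith
  qed
  also have "\<dots> = \<delta> / (1 - \<gamma>)" using g by (simp add: field_simps)
  finally show ?case .
qed

lemma ret_zero: "ret_h (\<lambda>s. 0) P S \<gamma> pol N h = 0"
  by (induction N arbitrary: h) auto

lemma ret_conv:
  assumes fin: "finite S"
    and Pn: "\<forall>s\<in>S. \<forall>u. \<forall>s'\<in>S. 0 \<le> P s u s'"
    and P1: "\<forall>s\<in>S. \<forall>u. (\<Sum>s'\<in>S. P s u s') = 1"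
    and g: "0 \<le> \<gamma>" "\<gamma> < 1"
    and s: "s \<in> S"
  shows "(\<lambda>N. ret_h R P S \<gamma> pol N [s]) \<longlonglongrightarrow> policy_value R P S \<gamma> pol s"
proof -
  define M where "M = Max ((\<lambda>s. \<bar>R s\<bar>) ` S)"
  have RM: "\<forall>s\<in>S. \<bar>R s\<bar> \<le> M" using fin unfolding M_def by auto
  have "convergent (\<lambda>N. ret_h R P S \<gamma> pol N [s])"
    by (rule conv_geom[OF _ g]) (rule ret_cauchy[OF fin Pn P1 g(1) RM], use s in simp)
  thus ?thesis unfolding policy_value_def by (simp add: convergent_LIMSEQ_iff)
qed

lemma pv_diff:
  assumes fin: "finite S"
    and Pn: "\<forall>s\<in>S. \<forall>u. \<forall>s'\<in>S. 0 \<le> P s u s'"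
    and P1: "\<forall>s\<in>S. \<forall>u. (\<Sum>s'\<in>S. P s u s') = 1"
    and g: "0 \<le> \<gamma>" "\<gamma> < 1"
    and RD: "\<forall>s\<in>S. \<bar>R1 s - R2 s\<bar> \<le> \<delta>"
    and s: "s \<in> S"
  shows "\<bar>policy_value R1 P S \<gamma> pol s - policy_value R2 P S \<gamma> pol s\<bar> \<le> \<delta> / (1 - \<gamma>)"
proof -
  have "(\<lambda>N. \<bar>ret_h R1 P S \<gamma> pol N [s] - ret_h R2 P S \<gamma> pol N [s]\<bar>) \<longlonglongrightarrow>
     \<bar>policy_value R1 P S \<gamma> pol s - policy_value R2 P S \<gamma> pol s\<bar>"
    by (intro tendsto_rabs tendsto_diff ret_conv[OF fin Pn P1 g s])
  thus ?thesis
    by (rule LIMSEQ_le_const2) (use ret_diff[OF fin Pn P1 g RD] s in auto)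
qed

lemma ov_diff:
  assumes fin: "finite S"
    and Pn: "\<forall>s\<in>S. \<forall>u. \<forall>s'\<in>S. 0 \<le> P s u s'"
    and P1: "\<forall>s\<in>S. \<forall>u. (\<Sum>s'\<in>S. P s u s') = 1"
    and g: "0 \<le> \<gamma>" "\<gamma> < 1"
    and RD: "\<forall>s\<in>S. \<bar>R1 s - R2 s\<bar> \<le> \<delta>"
    and s: "s \<in> S"
  shows "opt_value_state R1 P S \<gamma> s \<le> opt_value_state R2 P S \<gamma> s + \<delta> / (1 - \<gamma>)"
proof -
  define M where "M = Max ((\<lambda>s. \<bar>R2 s\<bar>) ` S)"
  have RM: "\<forall>s\<in>S. \<bar>R2 s - (\<lambda>s. 0) s\<bar> \<le> M" using fin unfolding M_def by auto
  have bdd: "bdd_above (range (\<lambda>pol. policy_value R2 P S \<gamma> pol s))"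
  proof (rule bdd_aboveI2)
    fix pol
    have "\<bar>policy_value R2 P S \<gamma> pol s - policy_value (\<lambda>s. 0) P S \<gamma> pol s\<bar> \<le> M / (1 - \<gamma>)"
      by (rule pv_diff[OF fin Pn P1 g RM s])
    moreover have "policy_value (\<lambda>s. 0) P S \<gamma> pol s = 0"
      unfolding policy_value_def ret_zero by simp
    ultimately show "policy_value R2 P S \<gamma> pol s \<le> M / (1 - \<gamma>)" by simp
  qed
  show ?thesis unfolding opt_value_state_def
  proof (rule cSUP_least)
    fix pol
    have "policy_value R1 P S \<gamma> pol s \<le> policy_value R2 P S \<gamma> pol s + \<delta> / (1 - \<gamma>)"
      using pv_diff[OF fin Pn P1 g RD s, of pol] by linarith
    also have "\<dots> \<le> (SUP pol. policy_value R2 P S \<gamma> pol s) + \<delta> / (1 - \<gamma>)"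
      using cSUP_upper[OF _ bdd, of pol] by simp
    finally show "policy_value R1 P S \<gamma> pol s \<le> (SUP pol. policy_value R2 P S \<gamma> pol s) + \<delta> / (1 - \<gamma>)" .
  qed simp
qed

lemma opt_diff:
  assumes fin: "finite S"
    and Pn: "\<forall>s\<in>S. \<forall>u. \<forall>s'\<in>S. 0 \<le> P s u s'"
    and P1: "\<forall>s\<in>S. \<forall>u. (\<Sum>s'\<in>S. P s u s') = 1"
    and g: "0 \<le> \<gamma>" "\<gamma> < 1"
    and RD: "\<forall>s\<in>S. \<bar>R1 s - R2 s\<bar> \<le> \<delta>"
    and rho: "\<forall>s\<in>S. 0 \<le> \<rho> s" "(\<Sum>s\<in>S. \<rho> s) = 1"
  shows "\<bar>opt_value R1 P S \<gamma> \<rho> - opt_value R2 P S \<gamma> \<rho>\<bar> \<le> \<delta> / (1 - \<gamma>)"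
proof -
  have RD': "\<forall>s\<in>S. \<bar>R2 s - R1 s\<bar> \<le> \<delta>" using RD by (simp add: abs_minus_commute)
  have "\<bar>opt_value R1 P S \<gamma> \<rho> - opt_value R2 P S \<gamma> \<rho>\<bar>
     = \<bar>\<Sum>s\<in>S. \<rho> s * (opt_value_state R1 P S \<gamma> s - opt_value_state R2 P S \<gamma> s)\<bar>"
    unfolding opt_value_def by (simp add: right_diff_distrib sum_subtractf)
  also have "\<dots> \<le> (\<Sum>s\<in>S. \<rho> s * (\<delta> / (1 - \<gamma>)))"
  proof (rule order_trans[OF sum_abs], rule sum_mono)
    fix s assume s: "s \<in> S"
    have r0: "0 \<le> \<rho> s" using rho s by auto
    have "\<bar>opt_value_state R1 P S \<gamma> s - opt_value_state R2 P S \<gamma> s\<bar> \<le> \<delta> / (1 - \<gamma>)"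
      using ov_diff[OF fin Pn P1 g RD s] ov_diff[OF fin Pn P1 g RD' s] by linarith
    thus "\<bar>\<rho> s * (opt_value_state R1 P S \<gamma> s - opt_value_state R2 P S \<gamma> s)\<bar> \<le> \<rho> s * (\<delta> / (1 - \<gamma>))"
      by (rule abs_mult_le[OF r0])
  qed
  also have "\<dots> = \<delta> / (1 - \<gamma>)" by (simp only: sum_distrib_right[symmetric]) (use rho in simp)
  finally show ?thesis .
qed

lemma inner_l1:
  fixes x v :: "real^'d"
  shows "\<bar>x \<bullet> v\<bar> \<le> infnorm x * l1norm v"
proof -
  have "\<bar>x \<bullet> v\<bar> = \<bar>\<Sum>i\<in>UNIV. x $ i * v $ i\<bar>" by (simp add: inner_vec_def)
  also have "\<dots> \<le> (\<Sum>i\<in>UNIV. infnorm x * \<bar>v $ i\<bar>)"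
    by (rule order_trans[OF sum_abs], rule sum_mono)
       (simp add: abs_mult mult_right_mono component_le_infnorm_cart)
  also have "\<dots> = infnorm x * l1norm v" by (simp add: l1norm_def sum_distrib_left)
  finally show ?thesis .
qed

theorem theorem6:
  fixes S :: "(real^'k) set"
    and P :: "real^'k \<Rightarrow> ('n::finite \<Rightarrow> 'u::finite) \<Rightarrow> real^'k \<Rightarrow> real"
    and \<rho> :: "real^'k \<Rightarrow> real"
    and \<gamma> :: real
    and C :: "(real^'d) set"
    and W :: "real^'k^'d"
    and f :: "('n \<Rightarrow> real^'d) \<Rightarrow> real^'d"
    and L :: "'n \<Rightarrow> real"
    and Tx Ty :: "'n \<Rightarrow> real^'d"
  assumes "finite S" and "S \<noteq> {}"
    and "\<forall>s\<in>S. \<forall>j. 0 \<le> s $ j \<and> s $ j \<le> 1"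
    and "\<forall>s\<in>S. \<forall>u. \<forall>s'\<in>S. 0 \<le> P s u s'"
    and "\<forall>s\<in>S. \<forall>u. (\<Sum>s'\<in>S. P s u s') = 1"
    and "\<forall>s\<in>S. 0 \<le> \<rho> s" and "(\<Sum>s\<in>S. \<rho> s) = 1"
    and "0 < \<gamma>" and "\<gamma> < 1"
    and "C \<subseteq> prob_simplex"
    and "\<forall>T. (\<forall>j. T j \<in> C) \<longrightarrow> (\<forall>i. \<forall>c\<in>C.
           infnorm (f (T(i := c)) - f T) \<le> L i * infnorm (c - T i))"
    and "\<forall>i. Tx i \<in> C" and "\<forall>i. Ty i \<in> C"
  shows "\<bar>opt_value (team_reward f W Tx) P S \<gamma> \<rho> - opt_value (team_reward f W Ty) P S \<gamma> \<rho>\<bar>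
         \<le> (Max ((\<lambda>s. l1norm (W *v s)) ` S) * (\<Sum>i\<in>UNIV. L i * infnorm (Tx i - Ty i)))
            / (\<gamma> * (1 - \<gamma>))"
proof -
  note A = assms
  define TA where "TA A = (\<lambda>i. if i \<in> A then Tx i else Ty i)" for A
  have TAC: "\<forall>j. TA A j \<in> C" for A using A(12,13) by (simp add: TA_def)
  have tel: "infnorm (f (TA B) - f Ty) \<le> (\<Sum>i\<in>B. L i * infnorm (Tx i - Ty i))" if "finite B" for B
    using that
  proof (induction B rule: finite_induct)
    case empty
    have "TA {} = Ty" by (simp add: TA_def)
    then show ?case by (simp add: infnorm_0)
  next
    case (insert a B)
    have e: "TA (insert a B) = (TA B)(a := Tx a)" by (auto simp: TA_def)
    have e2: "TA B a = Ty a" using insert.hyps by (simp add: TA_def)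
    have lip: "infnorm (f (TA (insert a B)) - f (TA B)) \<le> L a * infnorm (Tx a - Ty a)"
      using A(11) TAC[of B] A(12) unfolding e by (metis e2)
    have "infnorm (f (TA (insert a B)) - f Ty)
        = infnorm ((f (TA (insert a B)) - f (TA B)) + (f (TA B) - f Ty))" by simp
    also have "\<dots> \<le> infnorm (f (TA (insert a B)) - f (TA B)) + infnorm (f (TA B) - f Ty)"
      by (rule infnorm_triangle)
    also have "\<dots> \<le> L a * infnorm (Tx a - Ty a) + (\<Sum>i\<in>B. L i * infnorm (Tx i - Ty i))"
      using lip insert.IH by linarith
    finally show ?case using insert.hyps by simp
  qed
  define D where "D = (\<Sum>i\<in>UNIV. L i * infnorm (Tx i - Ty i))"
  have "TA UNIV = Tx" by (simp add: TA_def)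
  hence fD: "infnorm (f Tx - f Ty) \<le> D" using tel[of UNIV] by (simp add: D_def)
  define sm where "sm = Max ((\<lambda>s. l1norm (W *v s)) ` S)"
  have l1nn: "0 \<le> l1norm v" for v :: "real^'d" by (simp add: l1norm_def sum_nonneg)
  have smge: "l1norm (W *v s) \<le> sm" if "s \<in> S" for s using A(1) that by (simp add: sm_def)
  have sm0: "0 \<le> sm" using A(2) smge l1nn by (meson ex_in_conv order_trans)
  have D0: "0 \<le> D" using fD infnorm_pos_le order_trans by blast
  have RD: "\<forall>s\<in>S. \<bar>team_reward f W Tx s - team_reward f W Ty s\<bar> \<le> sm * D"
  proof
    fix s assume s: "s \<in> S"
    have "\<bar>team_reward f W Tx s - team_reward f W Ty s\<bar> = \<bar>(f Tx - f Ty) \<bullet> (W *v s)\<bar>"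
      by (simp add: team_reward_def inner_diff_left)
    also have "\<dots> \<le> infnorm (f Tx - f Ty) * l1norm (W *v s)" by (rule inner_l1)
    also have "\<dots> \<le> D * sm" using fD smge[OF s] D0 l1nn by (intro mult_mono) auto
    finally show "\<bar>team_reward f W Tx s - team_reward f W Ty s\<bar> \<le> sm * D" by (simp add: mult.commute)
  qed
  have "\<bar>opt_value (team_reward f W Tx) P S \<gamma> \<rho> - opt_value (team_reward f W Ty) P S \<gamma> \<rho>\<bar>
      \<le> sm * D / (1 - \<gamma>)"
    by (rule opt_diff[OF A(1) A(4) A(5) _ A(9) RD A(6) A(7)]) (use A(8) in simp)
  also have "\<dots> \<le> sm * D / (\<gamma> * (1 - \<gamma>))"
    using A(8,9) sm0 D0 by (intro divide_left_mono) (auto simp: mult_le_cancel_right1)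
  finally show ?thesis by (simp add: sm_def D_def)
qed

end
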